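(* Let $n,t\ge1$ be integers and $b\ge0$ real. Consider the negative-fill variable-processor cup game on $n$ cups, starting from all fills $0$, played for $t$ rounds against a greedy emptier. The following are equivalent: (1) the filler can guarantee that after $t$ rounds at least one cup has fill $\ge b$; (2) the filler can guarantee that after $t$ rounds at least one cup has fill $\le -b$; (3) the filler can guarantee that after $t$ rounds at least one cup has fill $\ge b$ or at least one cup has fill $\le -b$.
   Context: Negative-fill variable-processor cup game: real fills $x_1,\dots,x_n$; in each round the filler chooses an integer $1\le p\le n$ and reals $a_i\in[0,1]$ with $\sum_i a_i=p$ and adds $a_i$ to cup $i$; then the emptier chooses $p$ distinct cups and subtracts exactly $1$ from each (fills may become negative). The greedy emptier always subtracts from the $p$ fullest cups after the filler's move. *)

theory Defs
  imports Complex_Main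
begin

text \<open>Cups are indexed by 0,...,n-1; a state is a function nat => real,
  of which only the values at indices below n are meaningful.\<close>

definition valid_fill :: "nat \<Rightarrow> nat \<Rightarrow> (nat \<Rightarrow> real) \<Rightarrow> bool" where
  "valid_fill n p a \<longleftrightarrow> 1 \<le> p \<and> p \<le> n \<and> (\<forall>i<n. 0 \<le> a i \<and> a i \<le> 1)
     \<and> (\<Sum>i<n. a i) = real p"

definition greedy_choice :: "nat \<Rightarrow> nat \<Rightarrow> (nat \<Rightarrow> real) \<Rightarrow> nat set \<Rightarrow> bool" where
  "greedy_choice n p y S \<longleftrightarrow> S \<subseteq> {..<n} \<and> card S = p
     \<and> (\<forall>i\<in>S. \<forall>j\<in>{..<n} - S. y j \<le> y i)"

text \<open>filler_wins n t G x: from state x, the filler has a (adaptive) strategy such that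
  after t more rounds against the greedy emptier (whatever its tie-breaking),
  the final state satisfies G.\<close>
fun filler_wins :: "nat \<Rightarrow> nat \<Rightarrow> ((nat \<Rightarrow> real) \<Rightarrow> bool) \<Rightarrow> (nat \<Rightarrow> real) \<Rightarrow> bool" where
  "filler_wins n 0 G x = G x"
| "filler_wins n (Suc t) G x =
     (\<exists>p a. valid_fill n p a \<and>
        (\<forall>S. greedy_choice n p (\<lambda>i. x i + a i) S \<longrightarrow>
           filler_wins n t G (\<lambda>i. x i + a i - (if i \<in> S then 1 else 0))))"

end

theory Submission imports Defs begin

definition sw :: "nat \<Rightarrow> nat \<Rightarrow> nat \<Rightarrow> nat" where
  "sw i j k = (if k = i then j else if k = j then i else k)"

lemma sw_sw[simp]: "sw i j (sw i j k) = k" by (simp add: sw_def)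
lemma sw_inj: "inj (sw i j)" by (metis injI sw_sw)
lemma sw_lt: "i < n \<Longrightarrow> j < n \<Longrightarrow> sw i j k < n \<longleftrightarrow> k < n"
  by (auto simp: sw_def)

lemma mono_wins:
  assumes "filler_wins n t G x" "\<And>z. G z \<Longrightarrow> H z"
  shows "filler_wins n t H x"
  using assms(1)
proof (induction t arbitrary: x)
  case 0 then show ?case using assms(2) by simp
next
  case (Suc t) then show ?case by fastforce
qed

lemma greedy_exists:
  assumes "p \<le> n" shows "\<exists>S. greedy_choice n p y S"
  using assms
proof (induction p)
  case 0 then show ?case by (auto simp: greedy_choice_def)
next
  case (Suc p)
  then obtain S where S: "greedy_choice n p y S" by auto
  let ?A = "{..<n} - S"
  have fin: "finite ?A" by simp
  have "card S = p" "S \<subseteq> {..<n}" using S by (auto simp: greedy_choice_def)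
  then have "card ?A = n - p" by (simp add: card_Diff_subset finite_subset)
  then have "card ?A > 0" using Suc.prems by simp
  then have ne: "?A \<noteq> {}" by (metis card.empty less_irrefl)
  obtain m where m: "m \<in> ?A" "\<forall>l\<in>?A. y l \<le> y m"
  proof -
    have "Max (y ` ?A) \<in> y ` ?A" using fin ne by (intro Max_in) auto
    then obtain m where "m \<in> ?A" "y m = Max (y ` ?A)" by auto
    moreover have "\<forall>l\<in>?A. y l \<le> Max (y ` ?A)" using fin by auto
    ultimately show ?thesis using that by auto
  qed
  have "greedy_choice n (Suc p) y (insert m S)"
    unfolding greedy_choice_def
  proof (intro conjI ballI)
    show "insert m S \<subseteq> {..<n}" using m \<open>S \<subseteq> {..<n}\<close> by auto
    have "m \<notin> S" "finite S" using m(1) \<open>S \<subseteq> {..<n}\<close> finite_subset by auto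
    then show "card (insert m S) = Suc p" using \<open>card S = p\<close> by simp
    fix k l assume k: "k \<in> insert m S" and l: "l \<in> {..<n} - insert m S"
    show "y l \<le> y k"
    proof (cases "k = m")
      case True then show ?thesis using m l by auto
    next
      case False then have "k \<in> S" using k by auto
      then show ?thesis using S l unfolding greedy_choice_def by auto
    qed
  qed
  then show ?case by blast
qed

lemma sum_sw:
  assumes "i < n" "j < n"
  shows "(\<Sum>k<n. f (sw i j k)) = (\<Sum>k<n. (f k::real))"
proof -
  show ?thesis
    by (rule sum.reindex_bij_witness[where i="sw i j" and j="sw i j"]) (auto simp: sw_lt assms)
qed

lemma wins_sw:
  assumes "filler_wins n t G x" "i < n" "j < n"
    and inv: "\<And>z. G (\<lambda>k. z (sw i j k)) = G z"
  shows "filler_wins n t G (\<lambda>k. x (sw i j k))"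
  using assms(1)
proof (induction t arbitrary: x)
  case 0 then show ?case using inv by simp
next
  case (Suc t)
  then obtain p a where va: "valid_fill n p a"
    and W: "\<And>S. greedy_choice n p (\<lambda>i. x i + a i) S \<Longrightarrow>
           filler_wins n t G (\<lambda>i. x i + a i - (if i \<in> S then 1 else 0))" by auto
  let ?a = "\<lambda>k. a (sw i j k)"
  have "valid_fill n p ?a" using va assms(2,3)
    by (auto simp: valid_fill_def sw_lt sum_sw[of i n j a])
  moreover have "filler_wins n t G (\<lambda>k. x (sw i j k) + ?a k - (if k \<in> S' then 1 else 0))"
    if g: "greedy_choice n p (\<lambda>k. x (sw i j k) + ?a k) S'" for S'
  proof -
    let ?S = "sw i j ` S'"
    have "greedy_choice n p (\<lambda>i. x i + a i) ?S"
      unfolding greedy_choice_def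
    proof (intro conjI ballI)
      have sub: "S' \<subseteq> {..<n}" and c: "card S' = p" using g by (auto simp: greedy_choice_def)
      show "?S \<subseteq> {..<n}" using sub sw_lt[OF assms(2,3)] by auto
      have "inj_on (sw i j) S'" using sw_inj by (rule inj_on_subset) simp
      then show "card ?S = p" using c card_image by metis
      fix u v assume u: "u \<in> ?S" and v: "v \<in> {..<n} - ?S"
      obtain u' where u': "u' \<in> S'" "u = sw i j u'" using u by auto
      have v': "sw i j v \<in> {..<n} - S'" using v sw_lt[OF assms(2,3)]
        by (metis DiffD1 DiffD2 DiffI image_eqI lessThan_iff sw_sw)
      have "x (sw i j (sw i j v)) + a (sw i j (sw i j v)) \<le> x (sw i j u') + a (sw i j u')"
        using g u'(1) v' unfolding greedy_choice_def by blast
      then show "x v + a v \<le> x u + a u" using u' by simp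
    qed
    from Suc.IH[OF W[OF this]]
    have "filler_wins n t G (\<lambda>k. x (sw i j k) + a (sw i j k) - (if sw i j k \<in> ?S then 1 else 0))"
      by simp
    moreover have "\<And>k. (sw i j k \<in> ?S) = (k \<in> S')"
      using sw_inj by (metis inj_image_mem_iff)
    ultimately show ?thesis by simp
  qed
  ultimately show ?case by auto
qed

definition sym_inv :: "nat \<Rightarrow> ((nat \<Rightarrow> real) \<Rightarrow> bool) \<Rightarrow> bool" where
  "sym_inv n G \<longleftrightarrow> (\<forall>i j z. i < n \<longrightarrow> j < n \<longrightarrow> G (\<lambda>k. z (sw i j k)) = G z)"

lemma greedy_swap_aux:
  assumes "card (S - T) = m" "greedy_choice n p y S" "greedy_choice n p y T"
    "filler_wins n t G (\<lambda>k. y k - (if k \<in> S then 1 else 0))" "sym_inv n G"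
  shows "filler_wins n t G (\<lambda>k. y k - (if k \<in> T then 1 else 0))"
  using assms
proof (induction m arbitrary: S)
  case 0
  have fS: "finite S" "finite T" "S \<subseteq> {..<n}" "T \<subseteq> {..<n}" "card S = p" "card T = p"
    using "0.prems" finite_subset unfolding greedy_choice_def by auto
  then have "S - T = {}" using "0.prems"(1) by simp
  then have "S \<subseteq> T" by auto
  then have "S = T" using fS card_subset_eq by metis
  then show ?case using "0.prems" by simp
next
  case (Suc m)
  have fS: "finite S" "finite T" "S \<subseteq> {..<n}" "T \<subseteq> {..<n}" "card S = p" "card T = p"
    using Suc.prems finite_subset unfolding greedy_choice_def by auto
  have "S - T \<noteq> {}" using Suc.prems(1) by (metis card.empty nat.distinct(1))
  then obtain i where i: "i \<in> S" "i \<notin> T" by auto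
  have "T - S \<noteq> {}"
  proof
    assume "T - S = {}"
    then have "T \<subseteq> S" by auto
    then have "T = S" using fS card_subset_eq by metis
    then show False using i by simp
  qed
  then obtain j where j: "j \<in> T" "j \<notin> S" by auto
  have ij: "i < n" "j < n" using i j fS by auto
  have "y j \<le> y i" using Suc.prems(2) i j ij unfolding greedy_choice_def by auto
  moreover have "y i \<le> y j" using Suc.prems(3) i j ij unfolding greedy_choice_def by auto
  ultimately have yij: "y i = y j" by simp
  define S' where "S' = insert j (S - {i})"
  have gS': "greedy_choice n p y S'"
    unfolding greedy_choice_def
  proof (intro conjI ballI)
    show "S' \<subseteq> {..<n}" using fS ij unfolding S'_def by auto
    have "p > 0" using fS i by (metis card_gt_0_iff empty_iff)
    then show "card S' = p" using fS i j unfolding S'_def by (simp add: card_Suc_Diff1)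
    fix k l assume k: "k \<in> S'" and l: "l \<in> {..<n} - S'"
    show "y l \<le> y k"
    proof (cases "k = j")
      case True
      show ?thesis
      proof (cases "l = i")
        case True then show ?thesis using yij \<open>k = j\<close> by simp
      next
        case False
        then have "l \<in> {..<n} - S" using l unfolding S'_def by auto
        then show ?thesis using Suc.prems(2) i yij True unfolding greedy_choice_def by auto
      qed
    next
      case False
      then have kS: "k \<in> S" using k unfolding S'_def by auto
      show ?thesis
      proof (cases "l = i")
        case True
        have "y j \<le> y k" using Suc.prems(2) kS j ij unfolding greedy_choice_def by auto
        then show ?thesis using yij True by simp
      next
        case False
        then have "l \<in> {..<n} - S" using l unfolding S'_def by auto
        then show ?thesis using Suc.prems(2) kS unfolding greedy_choice_def by auto
      qed
    qed
  qed
  have "S' - T = (S - T) - {i}" unfolding S'_def using j i by auto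
  then have cS': "card (S' - T) = m" using Suc.prems(1) i by simp
  have eq: "(\<lambda>k. y k - (if k \<in> S' then 1 else 0))
        = (\<lambda>k. (\<lambda>k. y k - (if k \<in> S then 1 else 0)) (sw i j k))"
    using i j yij unfolding S'_def sw_def by (auto intro!: ext)
  have "filler_wins n t G (\<lambda>k. y k - (if k \<in> S' then 1 else 0))"
    unfolding eq using Suc.prems(4,5) ij unfolding sym_inv_def
    by (intro wins_sw) auto
  then show ?case using Suc.IH[OF cS' gS' Suc.prems(3) _ Suc.prems(5)] by simp
qed

lemma split_wins:
  assumes "filler_wins n t (\<lambda>z. G1 z \<or> G2 z) x" "sym_inv n G1" "sym_inv n G2"
  shows "filler_wins n t G1 x \<or> filler_wins n t G2 x"
  using assms(1)
proof (induction t arbitrary: x)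
  case 0 then show ?case by simp
next
  case (Suc t)
  then obtain p a where va: "valid_fill n p a"
    and W: "\<And>S. greedy_choice n p (\<lambda>i. x i + a i) S \<Longrightarrow>
           filler_wins n t (\<lambda>z. G1 z \<or> G2 z) (\<lambda>i. x i + a i - (if i \<in> S then 1 else 0))" by auto
  have "p \<le> n" using va by (simp add: valid_fill_def)
  then obtain S0 where S0: "greedy_choice n p (\<lambda>i. x i + a i) S0" using greedy_exists by blast
  from Suc.IH[OF W[OF S0]]
  show ?case
  proof
    assume h: "filler_wins n t G1 (\<lambda>i. x i + a i - (if i \<in> S0 then 1 else 0))"
    have "filler_wins n t G1 (\<lambda>i. x i + a i - (if i \<in> S then 1 else 0))"
      if "greedy_choice n p (\<lambda>i. x i + a i) S" for S
      using greedy_swap_aux[OF refl S0 that _ assms(2)] h by simp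
    then have "filler_wins n (Suc t) G1 x" using va by auto
    then show ?thesis by simp
  next
    assume h: "filler_wins n t G2 (\<lambda>i. x i + a i - (if i \<in> S0 then 1 else 0))"
    have "filler_wins n t G2 (\<lambda>i. x i + a i - (if i \<in> S then 1 else 0))"
      if "greedy_choice n p (\<lambda>i. x i + a i) S" for S
      using greedy_swap_aux[OF refl S0 that _ assms(3)] h by simp
    then have "filler_wins n (Suc t) G2 x" using va by auto
    then show ?thesis by simp
  qed
qed


lemma mirror:
  assumes "filler_wins n t G x" "1 \<le> n"
  shows "filler_wins n t (\<lambda>z. G (\<lambda>i. - z i)) (\<lambda>i. - x i)"
  using assms(1)
proof (induction t arbitrary: x)
  case 0 then show ?case by simp
next
  case (Suc t)
  then obtain p a where va: "valid_fill n p a"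
    and W: "\<And>S. greedy_choice n p (\<lambda>i. x i + a i) S \<Longrightarrow>
           filler_wins n t G (\<lambda>i. x i + a i - (if i \<in> S then 1 else 0))" by auto
  have pn: "1 \<le> p" "p \<le> n" and a01: "\<And>i. i < n \<Longrightarrow> 0 \<le> a i \<and> a i \<le> 1"
    and asum: "(\<Sum>i<n. a i) = real p" using va by (auto simp: valid_fill_def)
  show ?case
  proof (cases "p = n")
    case True
    have "(\<Sum>i<n. 1 - a i) = 0" using asum True by (simp add: sum_subtractf)
    then have a1: "\<And>i. i < n \<Longrightarrow> a i = 1"
      using a01 by (subst (asm) sum_nonneg_eq_0_iff) auto
    have g0: "greedy_choice n p (\<lambda>i. x i + a i) {..<n}" using True by (simp add: greedy_choice_def)
    from Suc.IH[OF W[OF g0]]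
    have IH: "filler_wins n t (\<lambda>z. G (\<lambda>i. - z i))
        (\<lambda>i. - (x i + a i - (if i \<in> {..<n} then 1 else 0)))" by simp
    define a' where "a' = (\<lambda>i. if i < n then 1 else - a i)"
    have va': "valid_fill n n a'" using assms(2) by (simp add: valid_fill_def a'_def)
    have "filler_wins n t (\<lambda>z. G (\<lambda>i. - z i)) (\<lambda>i. - x i + a' i - (if i \<in> S' then 1 else 0))"
      if g: "greedy_choice n n (\<lambda>i. - x i + a' i) S'" for S'
    proof -
      have "S' \<subseteq> {..<n}" "card S' = n" using g by (auto simp: greedy_choice_def)
      then have "S' = {..<n}" by (metis card_lessThan card_subset_eq finite_lessThan)
      then have "(\<lambda>i. - x i + a' i - (if i \<in> S' then 1 else 0))
          = (\<lambda>i. - (x i + a i - (if i \<in> {..<n} then 1 else 0)))"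
        by (auto simp: a'_def a1 intro!: ext)
      then show ?thesis using IH by simp
    qed
    then show ?thesis using va' by auto
  next
    case False
    then have pl: "p < n" using pn by simp
    define a' where "a' = (\<lambda>i. if i < n then 1 - a i else - a i)"
    have "(\<Sum>i<n. a' i) = (\<Sum>i<n. 1 - a i)" by (simp add: a'_def)
    also have "\<dots> = real n - real p" using asum by (simp add: sum_subtractf)
    finally have va': "valid_fill n (n - p) a'" using pl a01
      by (auto simp: valid_fill_def a'_def of_nat_diff)
    have "filler_wins n t (\<lambda>z. G (\<lambda>i. - z i)) (\<lambda>i. - x i + a' i - (if i \<in> S' then 1 else 0))"
      if g: "greedy_choice n (n - p) (\<lambda>i. - x i + a' i) S'" for S'
    proof -
      have sub: "S' \<subseteq> {..<n}" and c: "card S' = n - p" using g by (auto simp: greedy_choice_def)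
      define S where "S = {..<n} - S'"
      have gS: "greedy_choice n p (\<lambda>i. x i + a i) S"
        unfolding greedy_choice_def
      proof (intro conjI ballI)
        show "S \<subseteq> {..<n}" unfolding S_def by auto
        show "card S = p" unfolding S_def using sub c pl
          by (simp add: card_Diff_subset finite_subset)
        fix k l assume k: "k \<in> S" and l: "l \<in> {..<n} - S"
        have "l \<in> S'" "k \<in> {..<n} - S'" "k < n" "l < n" using k l sub unfolding S_def by auto
        then have "- x k + a' k \<le> - x l + a' l" using g unfolding greedy_choice_def by blast
        then show "x l + a l \<le> x k + a k" using \<open>k < n\<close> \<open>l < n\<close> by (simp add: a'_def)
      qed
      from Suc.IH[OF W[OF gS]]
      have IH: "filler_wins n t (\<lambda>z. G (\<lambda>i. - z i))
        (\<lambda>i. - (x i + a i - (if i \<in> S then 1 else 0)))" by simp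
      have "(\<lambda>i. - x i + a' i - (if i \<in> S' then 1 else 0))
          = (\<lambda>i. - (x i + a i - (if i \<in> S then 1 else 0)))"
        using sub by (auto simp: a'_def S_def intro!: ext)
      then show ?thesis using IH by simp
    qed
    then show ?thesis using va' by auto
  qed
qed

theorem propositionA1:
  fixes n t :: nat and b :: real
  assumes "n \<ge> 1" and "t \<ge> 1" and "b \<ge> 0"
  shows "(filler_wins n t (\<lambda>x. \<exists>i<n. x i \<ge> b) (\<lambda>_. 0)
            \<longleftrightarrow> filler_wins n t (\<lambda>x. \<exists>i<n. x i \<le> - b) (\<lambda>_. 0))
       \<and> (filler_wins n t (\<lambda>x. \<exists>i<n. x i \<le> - b) (\<lambda>_. 0)
            \<longleftrightarrow> filler_wins n t (\<lambda>x. (\<exists>i<n. x i \<ge> b) \<or> (\<exists>i<n. x i \<le> - b)) (\<lambda>_. 0))"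
proof -
  let ?G1 = "\<lambda>x. \<exists>i<n. x i \<ge> b"
  let ?G2 = "\<lambda>x. \<exists>i<n. x i \<le> - b"
  have n1: "(\<lambda>z. ?G1 (\<lambda>i. - z i)) = ?G2" by (rule ext) auto
  have n2: "(\<lambda>z. ?G2 (\<lambda>i. - z i)) = ?G1" by (rule ext) auto
  have z: "(\<lambda>i. - (0::real)) = (\<lambda>_. 0)" by simp
  have m1: "filler_wins n t ?G1 (\<lambda>_. 0) \<Longrightarrow> filler_wins n t ?G2 (\<lambda>_. 0)"
  proof -
    assume h: "filler_wins n t ?G1 (\<lambda>_. 0)"
    have "filler_wins n t (\<lambda>z. ?G1 (\<lambda>i. - z i)) (\<lambda>i. - (0::real))"
      using mirror[OF h assms(1)] by simp
    then show ?thesis unfolding n1 z .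
  qed
  have m2: "filler_wins n t ?G2 (\<lambda>_. 0) \<Longrightarrow> filler_wins n t ?G1 (\<lambda>_. 0)"
  proof -
    assume h: "filler_wins n t ?G2 (\<lambda>_. 0)"
    have "filler_wins n t (\<lambda>z. ?G2 (\<lambda>i. - z i)) (\<lambda>i. - (0::real))"
      using mirror[OF h assms(1)] by simp
    then show ?thesis unfolding n2 z .
  qed
  have e12: "filler_wins n t ?G1 (\<lambda>_. 0) \<longleftrightarrow> filler_wins n t ?G2 (\<lambda>_. 0)"
    using m1 m2 by (rule iffI)
  have ex: "(\<exists>k<n. P (sw i j k)) \<longleftrightarrow> (\<exists>k<n. P k)" if ij: "i < n" "j < n" for P i j
  proof
    assume "\<exists>k<n. P (sw i j k)"
    then obtain k where "k < n" "P (sw i j k)" by blast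
    then show "\<exists>k<n. P k" using sw_lt[OF ij] by blast
  next
    assume "\<exists>k<n. P k"
    then obtain k where k: "k < n" "P k" by blast
    then have "sw i j k < n" "P (sw i j (sw i j k))" using sw_lt[OF ij] by auto
    then show "\<exists>k<n. P (sw i j k)" by blast
  qed
  have s1: "sym_inv n ?G1" unfolding sym_inv_def
  proof (intro allI impI)
    fix i j z assume "i < n" "j < n"
    from ex[OF this, of "\<lambda>k. b \<le> z k"] show "?G1 (\<lambda>k. z (sw i j k)) = ?G1 z" by simp
  qed
  have s2: "sym_inv n ?G2" unfolding sym_inv_def
  proof (intro allI impI)
    fix i j z assume "i < n" "j < n"
    from ex[OF this, of "\<lambda>k. z k \<le> - b"] show "?G2 (\<lambda>k. z (sw i j k)) = ?G2 z" by simp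
  qed
  have "filler_wins n t ?G2 (\<lambda>_. 0) \<longleftrightarrow> filler_wins n t (\<lambda>x. ?G1 x \<or> ?G2 x) (\<lambda>_. 0)"
  proof
    assume "filler_wins n t ?G2 (\<lambda>_. 0)"
    then show "filler_wins n t (\<lambda>x. ?G1 x \<or> ?G2 x) (\<lambda>_. 0)" by (rule mono_wins) simp
  next
    assume "filler_wins n t (\<lambda>x. ?G1 x \<or> ?G2 x) (\<lambda>_. 0)"
    then have "filler_wins n t ?G1 (\<lambda>_. 0) \<or> filler_wins n t ?G2 (\<lambda>_. 0)"
      by (rule split_wins[OF _ s1 s2])
    then show "filler_wins n t ?G2 (\<lambda>_. 0)" using m1 by blast
  qed
  with e12 show ?thesis by (rule conjI)
qed

end
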